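(* $E_3<_{\mathrm{Learn}}\mathbf{PL}$: every $E_3$-learnable family of structures is $\mathbf{PL}$-learnable, and there is a $\mathbf{PL}$-learnable family that is not $E_3$-learnable.
   Context: All structures are countable, have domain $\mathbb{N}$, are in a finite relational signature, and are identified with their atomic diagrams (elements of $2^{\mathbb{N}}$). A family of structures $\mathfrak{K}$ is a countable set of pairwise nonisomorphic such structures; $\mathcal{S}\restriction_s$ is the finite substructure on $\{0,\dots,s\}$; $\mathrm{LD}(\mathfrak{K})\subseteq2^{\mathbb{N}}$ is the set of structures with domain $\mathbb{N}$ isomorphic to a member of $\mathfrak{K}$ (subspace topology). For an equivalence relation $E$ on a space $X$, $\mathfrak{K}$ is $E$-learnable if there is a continuous $\Gamma:\mathrm{LD}(\mathfrak{K})\to X$ with $\mathcal{S}\cong\mathcal{S}'\iff\Gamma(\mathcal{S})E\Gamma(\mathcal{S}')$ on $\mathrm{LD}(\mathfrak{K})$. Fix a computable bijection $\langle\cdot,\cdot\rangle:\mathbb{N}^2\to\mathbb{N}$; $p^{[m]}(n)=p(\langle m,n\rangle)$ for $p\in\mathbb{N}^{\mathbb{N}\times\mathbb{N}}$; $p\,E_0\,q\iff\exists m\forall n\ge m\ p(n)=q(n)$; $p\,E_3\,q\iff\forall m\ p^{[m]}E_0q^{[m]}$. A learner is an arbitrary function from $\{\mathcal{S}\restriction_s:\mathcal{S}\in\mathrm{LD}(\mathfrak{K})\}$ to $\{\ulcorner\mathcal{A}\urcorner:\mathcal{A}\in\mathfrak{K}\}\cup\{?\}$. $\mathfrak{K}$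 is $\mathbf{PL}$-learnable if some learner $\mathbf{M}$ satisfies: for every $\mathcal{S}\in\mathrm{LD}(\mathfrak{K})$ and $\mathcal{A}\in\mathfrak{K}$, $\{n:\mathbf{M}(\mathcal{S}\restriction_n)=\ulcorner\mathcal{A}\urcorner\}$ is infinite iff $\mathcal{A}\cong\mathcal{S}$. $X<_{\mathrm{Learn}}Y$ means every $X$-learnable family is $Y$-learnable but not conversely. *)

theory Defs
  imports "HOL-Library.Nat_Bijection" "HOL-Library.Countable_Set"
begin

text \<open>A finite relational signature is given by the list of arities of its
relation symbols (symbol i has arity sig ! i, for i < length sig).
A structure with domain the natural numbers is identified with its atomic diagram,
here represented as the characteristic function of its relations.\<close>

type_synonym struc = "nat \<Rightarrow> nat list \<Rightarrow> bool"

definition is_struc :: "nat list \<Rightarrow> struc \<Rightarrow> bool" where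
  "is_struc sig S \<longleftrightarrow> (\<forall>i xs. S i xs \<longrightarrow> i < length sig \<and> length xs = sig ! i)"

definition iso :: "struc \<Rightarrow> struc \<Rightarrow> bool" where
  "iso S T \<longleftrightarrow> (\<exists>f. bij f \<and> (\<forall>i xs. S i xs \<longleftrightarrow> T i (map f xs)))"

definition restr :: "struc \<Rightarrow> nat \<Rightarrow> nat \<times> struc" where
  "restr S s = (s, \<lambda>i xs. S i xs \<and> (\<forall>x\<in>set xs. x \<le> s))"

definition family :: "nat list \<Rightarrow> struc set \<Rightarrow> bool" where
  "family sig K \<longleftrightarrow> countable K \<and> (\<forall>A\<in>K. is_struc sig A) \<and>
     (\<forall>A\<in>K. \<forall>B\<in>K. A \<noteq> B \<longrightarrow> \<not> iso A B)"

definition LD :: "nat list \<Rightarrow> struc set \<Rightarrow> struc set" where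
  "LD sig K = {S. is_struc sig S \<and> (\<exists>A\<in>K. iso S A)}"

text \<open>Continuity of a map from the subspace LD(K) of Cantor space (atomic diagrams)
into Baire space, written out: basic neighbourhoods of a structure in the atomic diagram
topology are given by fixing its restriction to {0,...,s}.\<close>
definition cont_on_LD :: "nat list \<Rightarrow> struc set \<Rightarrow> (struc \<Rightarrow> nat \<Rightarrow> nat) \<Rightarrow> bool" where
  "cont_on_LD sig K \<Gamma> \<longleftrightarrow> (\<forall>S\<in>LD sig K. \<forall>n. \<exists>s. \<forall>S'\<in>LD sig K.
      restr S' s = restr S s \<longrightarrow> (\<forall>k<n. \<Gamma> S' k = \<Gamma> S k))"

definition E0 :: "(nat \<Rightarrow> nat) \<Rightarrow> (nat \<Rightarrow> nat) \<Rightarrow> bool" where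
  "E0 p q \<longleftrightarrow> (\<exists>m. \<forall>n\<ge>m. p n = q n)"

definition column :: "(nat \<Rightarrow> nat) \<Rightarrow> nat \<Rightarrow> nat \<Rightarrow> nat" where
  "column p m = (\<lambda>n. p (prod_encode (m, n)))"

definition E3 :: "(nat \<Rightarrow> nat) \<Rightarrow> (nat \<Rightarrow> nat) \<Rightarrow> bool" where
  "E3 p q \<longleftrightarrow> (\<forall>m. E0 (column p m) (column q m))"

definition E3_learnable :: "nat list \<Rightarrow> struc set \<Rightarrow> bool" where
  "E3_learnable sig K \<longleftrightarrow> (\<exists>\<Gamma>. cont_on_LD sig K \<Gamma> \<and>
     (\<forall>S\<in>LD sig K. \<forall>S'\<in>LD sig K. iso S S' \<longleftrightarrow> E3 (\<Gamma> S) (\<Gamma> S')))"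

text \<open>A learner maps finite substructures to a conjecture: Some A (the code of A \<in> K) or None (?).\<close>
definition PL_learnable :: "nat list \<Rightarrow> struc set \<Rightarrow> bool" where
  "PL_learnable sig K \<longleftrightarrow> (\<exists>M :: nat \<times> struc \<Rightarrow> struc option.
     (\<forall>S\<in>LD sig K. \<forall>n. M (restr S n) = None \<or> (\<exists>A\<in>K. M (restr S n) = Some A)) \<and>
     (\<forall>S\<in>LD sig K. \<forall>A\<in>K. infinite {n. M (restr S n) = Some A} \<longleftrightarrow> iso A S))"

end

theory Submission
  imports Defs
begin

definition Dset :: "(nat \<Rightarrow> nat \<Rightarrow> nat) \<Rightarrow> (nat \<Rightarrow> nat \<Rightarrow> bool) \<Rightarrow> (nat \<Rightarrow> nat) \<Rightarrow> nat \<Rightarrow> nat \<Rightarrow> nat \<Rightarrow> nat set" where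
  "Dset p kn q t c x = {n. kn t (prod_encode (c,n)) \<and> q (prod_encode (c,n)) \<noteq> p x (prod_encode (c,n))}"

definition win where
  "win p col kn q t i j = (\<exists>n\<in>Dset p kn q t (col i j) j. \<forall>n'\<in>Dset p kn q t (col i j) i. n' < n)"

definition good where
  "good I p col kn q t i k = (\<forall>j\<in>I. j \<noteq> i \<longrightarrow> j < k \<longrightarrow> win p col kn q t i j)"

primrec cnt where
  "cnt I p col kn q i 0 = 0"
| "cnt I p col kn q i (Suc t) = cnt I p col kn q i t + (if good I p col kn q t i (cnt I p col kn q i t) then 1 else 0)"

definition ev where
  "ev I p col kn q i t = good I p col kn q t i (cnt I p col kn q i t)"

definition guess where
  "guess I p col kn q t = (if \<exists>i\<in>I. ev I p col kn q i t then Some (LEAST i. i\<in>I \<and> ev I p col kn q i t) else None)"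

lemma guess_inv:
  assumes "\<forall>u\<le>t. \<forall>k. (kn u k \<longleftrightarrow> kn' u k) \<and> (kn u k \<longrightarrow> q k = q' k)"
  shows "guess I p col kn q t = guess I p col kn' q' t"
proof -
  have D: "Dset p kn q u c x = Dset p kn' q' u c x" if "u \<le> t" for u c x
    using assms that unfolding Dset_def by auto
  have W: "good I p col kn q u i k = good I p col kn' q' u i k" if "u \<le> t" for u i k
    using D[OF that] unfolding good_def win_def by simp
  have C: "u \<le> t \<Longrightarrow> cnt I p col kn q i u = cnt I p col kn' q' i u" for u i
    by (induction u) (auto simp: W)
  have E: "ev I p col kn q i t = ev I p col kn' q' i t" for i
    unfolding ev_def using C[of t i] W[of t] by simp
  show ?thesis unfolding guess_def E by simp
qed

lemma cnt_mono: "t \<le> t' \<Longrightarrow> cnt I p col kn q i t \<le> cnt I p col kn q i t'"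
  by (induction t' rule: dec_induct) auto

lemma core:
  fixes I :: "nat set" and p :: "nat \<Rightarrow> nat \<Rightarrow> nat" and q :: "nat \<Rightarrow> nat"
  assumes sep: "\<And>i j. i\<in>I \<Longrightarrow> j\<in>I \<Longrightarrow> i\<noteq>j \<Longrightarrow> \<not> E0 (column (p i) (col i j)) (column (p j) (col i j))"
    and i0: "i0 \<in> I" "E3 (p i0) q"
    and knmono: "\<And>t t' k. kn t k \<Longrightarrow> t \<le> t' \<Longrightarrow> kn t' k"
    and knev: "\<And>k. \<exists>t. kn t k"
    and iI: "i \<in> I"
  shows "infinite {t. guess I p col kn q t = Some i} \<longleftrightarrow> i = i0"
proof -
  have kev: "\<forall>\<^sub>F t in sequentially. kn t k" for k
    using knev[of k] knmono unfolding eventually_sequentially by blast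
  have agree: "\<exists>m. \<forall>n\<ge>m. p i0 (prod_encode (c,n)) = q (prod_encode (c,n))" for c
    using i0(2) unfolding E3_def E0_def column_def by auto
  have trueWin: "\<forall>\<^sub>F t in sequentially. win p col kn q t i0 j" if "j \<in> I" "j \<noteq> i0" for j
  proof -
    let ?c = "col i0 j"
    obtain m where m: "\<forall>n\<ge>m. p i0 (prod_encode (?c,n)) = q (prod_encode (?c,n))"
      using agree by blast
    have "\<not> E0 (column (p i0) ?c) (column (p j) ?c)" using sep[OF i0(1) that(1)] that(2) by auto
    then obtain n where n: "n \<ge> m" "p i0 (prod_encode (?c,n)) \<noteq> p j (prod_encode (?c,n))"
      unfolding E0_def column_def by auto
    have qn: "q (prod_encode (?c,n)) \<noteq> p j (prod_encode (?c,n))" using m n by auto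
    show ?thesis using kev[of "prod_encode (?c,n)"]
    proof (rule eventually_mono)
      fix t assume kt: "kn t (prod_encode (?c,n))"
      have "n \<in> Dset p kn q t ?c j" using kt qn unfolding Dset_def by auto
      moreover have "\<forall>n'\<in>Dset p kn q t ?c i0. n' < n"
      proof
        fix n' assume "n' \<in> Dset p kn q t ?c i0"
        then have "q (prod_encode (?c,n')) \<noteq> p i0 (prod_encode (?c,n'))" unfolding Dset_def by auto
        then have "n' < m" using m by (metis not_le)
        then show "n' < n" using n by auto
      qed
      ultimately show "win p col kn q t i0 j" unfolding win_def by blast
    qed
  qed
  have falseLose: "\<forall>\<^sub>F t in sequentially. \<not> win p col kn q t i i0" if "i \<in> I" "i \<noteq> i0" for i
  proof -
    let ?c = "col i i0"
    obtain m where m: "\<forall>n\<ge>m. p i0 (prod_encode (?c,n)) = q (prod_encode (?c,n))"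
      using agree by blast
    have "\<not> E0 (column (p i) ?c) (column (p i0) ?c)" using sep[OF that(1) i0(1)] that(2) by auto
    then obtain n where n: "n \<ge> m" "p i (prod_encode (?c,n)) \<noteq> p i0 (prod_encode (?c,n))"
      unfolding E0_def column_def by auto
    have qn: "q (prod_encode (?c,n)) \<noteq> p i (prod_encode (?c,n))" using m n by auto
    show ?thesis using kev[of "prod_encode (?c,n)"]
    proof (rule eventually_mono)
      fix t assume kt: "kn t (prod_encode (?c,n))"
      have nD: "n \<in> Dset p kn q t ?c i" using kt qn unfolding Dset_def by auto
      show "\<not> win p col kn q t i i0"
      proof
        assume "win p col kn q t i i0"
        then obtain n1 where n1: "n1 \<in> Dset p kn q t ?c i0" "\<forall>n'\<in>Dset p kn q t ?c i. n' < n1"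
          unfolding win_def by blast
        have "n < n1" using n1(2) nD by auto
        moreover have "q (prod_encode (?c,n1)) \<noteq> p i0 (prod_encode (?c,n1))" using n1(1) unfolding Dset_def by auto
        then have "n1 < m" using m by (metis not_le)
        ultimately show False using n by auto
      qed
    qed
  qed
  have goodTrue: "\<forall>\<^sub>F t in sequentially. good I p col kn q t i0 k" for k
  proof -
    have "\<forall>\<^sub>F t in sequentially. \<forall>j\<in>{..<k}. (j \<in> I \<and> j \<noteq> i0 \<longrightarrow> win p col kn q t i0 j)"
    proof (rule eventually_ball_finite)
      show "finite {..<k}" by simp
      show "\<forall>j\<in>{..<k}. \<forall>\<^sub>F t in sequentially. j \<in> I \<and> j \<noteq> i0 \<longrightarrow> win p col kn q t i0 j"
      proof
        fix j
        show "\<forall>\<^sub>F t in sequentially. j \<in> I \<and> j \<noteq> i0 \<longrightarrow> win p col kn q t i0 j"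
          by (cases "j \<in> I \<and> j \<noteq> i0") (auto intro: trueWin)
      qed
    qed
    then show ?thesis by (rule eventually_mono) (auto simp: good_def)
  qed
  have evTrue: "infinite {t. ev I p col kn q i0 t}"
  proof
    assume fin: "finite {t. ev I p col kn q i0 t}"
    then obtain T where T: "\<forall>t\<ge>T. \<not> ev I p col kn q i0 t"
      by (metis (mono_tags, lifting) finite_nat_set_iff_bounded_le mem_Collect_eq not_less_eq_eq)
    have cst: "t \<ge> T \<Longrightarrow> cnt I p col kn q i0 t = cnt I p col kn q i0 T" for t
    proof (induction t rule: dec_induct)
      case (step n) then show ?case using T unfolding ev_def by auto
    qed simp
    obtain T' where T': "\<forall>t\<ge>T'. good I p col kn q t i0 (cnt I p col kn q i0 T)"
      using goodTrue unfolding eventually_sequentially by blast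
    have "ev I p col kn q i0 (max T T')" unfolding ev_def using cst[of "max T T'"] T' by auto
    then show False using T by auto
  qed
  have evFalse: "finite {t. ev I p col kn q i t}" if iI: "i \<in> I" and ne: "i \<noteq> i0" for i
  proof (rule ccontr)
    assume inf: "infinite {t. ev I p col kn q i t}"
    obtain T where T: "\<forall>t\<ge>T. \<not> win p col kn q t i i0"
      using falseLose[OF iI ne] unfolding eventually_sequentially by blast
    have unb: "\<exists>t. N \<le> cnt I p col kn q i t" for N
    proof (induction N)
      case (Suc N)
      then obtain t0 where t0: "N \<le> cnt I p col kn q i t0" by blast
      obtain t where t: "t \<ge> t0" "ev I p col kn q i t"
        using inf by (metis (mono_tags, lifting) finite_nat_set_iff_bounded_le mem_Collect_eq nat_le_linear)
      have "cnt I p col kn q i (Suc t) = cnt I p col kn q i t + 1" using t(2) unfolding ev_def by simp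
      moreover have "cnt I p col kn q i t0 \<le> cnt I p col kn q i t" using cnt_mono t(1) by blast
      ultimately show ?case using t0 by (metis Suc_le_mono add.commute le_trans plus_1_eq_Suc)
    qed simp
    obtain t1 where t1: "Suc i0 \<le> cnt I p col kn q i t1" using unb by blast
    obtain t where t: "t \<ge> max T t1" "ev I p col kn q i t"
      using inf by (metis (mono_tags, lifting) finite_nat_set_iff_bounded_le mem_Collect_eq nat_le_linear)
    have "cnt I p col kn q i t1 \<le> cnt I p col kn q i t" using cnt_mono t(1) by simp
    then have "i0 < cnt I p col kn q i t" using t1 by simp
    then have "win p col kn q t i i0" using t(2) i0(1) ne unfolding ev_def good_def by auto
    then show False using T t(1) by auto
  qed
  have gsub: "{t. guess I p col kn q t = Some i} \<subseteq> {t. ev I p col kn q i t}" for i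
  proof
    fix t assume "t \<in> {t. guess I p col kn q t = Some i}"
    then have g: "guess I p col kn q t = Some i" by simp
    then have ex: "\<exists>i\<in>I. ev I p col kn q i t" unfolding guess_def by (auto split: if_splits)
    then have "i = (LEAST i. i\<in>I \<and> ev I p col kn q i t)" using g unfolding guess_def by auto
    moreover have "(LEAST i. i\<in>I \<and> ev I p col kn q i t) \<in> I \<and> ev I p col kn q (LEAST i. i\<in>I \<and> ev I p col kn q i t) t"
      using ex by (metis (mono_tags, lifting) LeastI)
    ultimately show "t \<in> {t. ev I p col kn q i t}" by simp
  qed
  show ?thesis
  proof
    assume "infinite {t. guess I p col kn q t = Some i}"
    then have "infinite {t. ev I p col kn q i t}" using gsub[of i] finite_subset by blast
    then show "i = i0" using evFalse iI by blast
  next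
    assume ii0: "i = i0"
    let ?B = "\<Union>j\<in>{j\<in>I. j < i0}. {t. ev I p col kn q j t}"
    have finB: "finite ?B" using evFalse by auto
    have "{t. ev I p col kn q i0 t} - ?B \<subseteq> {t. guess I p col kn q t = Some i0}"
    proof
      fix t assume t: "t \<in> {t. ev I p col kn q i0 t} - ?B"
      then have e: "ev I p col kn q i0 t" by simp
      have "(LEAST i. i\<in>I \<and> ev I p col kn q i t) = i0"
      proof (rule Least_equality)
        show "i0 \<in> I \<and> ev I p col kn q i0 t" using e i0 by simp
        show "\<And>y. y \<in> I \<and> ev I p col kn q y t \<Longrightarrow> i0 \<le> y" using t by (metis (mono_tags, lifting) UN_I mem_Collect_eq DiffE not_le)
      qed
      then show "t \<in> {t. guess I p col kn q t = Some i0}" using e i0(1) unfolding guess_def by auto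
    qed
    moreover have "infinite ({t. ev I p col kn q i0 t} - ?B)" using evTrue finB by (rule Diff_infinite_finite[rotated])
    ultimately show "infinite {t. guess I p col kn q t = Some i}" using ii0 finite_subset by blast
  qed
qed

lemma restr_mono: "restr S a = restr S' a \<Longrightarrow> b \<le> a \<Longrightarrow> restr S b = restr S' b"
  unfolding restr_def by (auto simp: fun_eq_iff) (meson le_trans)+

lemma fst_restr[simp]: "fst (restr S n) = n" by (simp add: restr_def)

lemma E0_sym: "E0 p q \<Longrightarrow> E0 q p" unfolding E0_def by metis
lemma E0_trans: "E0 p q \<Longrightarrow> E0 q r \<Longrightarrow> E0 p r" unfolding E0_def by (metis le_trans nat_le_linear)
lemma E3_sym: "E3 p q \<Longrightarrow> E3 q p" unfolding E3_def using E0_sym by blast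
lemma E3_trans: "E3 p q \<Longrightarrow> E3 q r \<Longrightarrow> E3 p r" unfolding E3_def using E0_trans by blast

lemma iso_refl: "iso S S" unfolding iso_def by (rule exI[of _ id]) simp

lemma K_LD: "family sig K \<Longrightarrow> A \<in> K \<Longrightarrow> A \<in> LD sig K"
  unfolding family_def LD_def using iso_refl by blast

theorem part1:
  assumes fam: "family sig K" and e3: "E3_learnable sig K"
  shows "PL_learnable sig K"
proof -
  obtain \<Gamma> where cont: "cont_on_LD sig K \<Gamma>"
    and red: "\<And>S S'. S\<in>LD sig K \<Longrightarrow> S'\<in>LD sig K \<Longrightarrow> iso S S' \<longleftrightarrow> E3 (\<Gamma> S) (\<Gamma> S')"
    using e3 unfolding E3_learnable_def by blast
  have cK: "countable K" using fam unfolding family_def by simp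
  define idx where "idx = to_nat_on K"
  define A where "A = from_nat_into K"
  define I where "I = idx ` K"
  define p where "p = (\<lambda>i. \<Gamma> (A i))"
  have Aidx: "a \<in> K \<Longrightarrow> A (idx a) = a" for a unfolding A_def idx_def using cK by simp
  have AI: "i \<in> I \<Longrightarrow> A i \<in> K \<and> idx (A i) = i" for i unfolding I_def using Aidx by auto
  have sep0: "\<exists>c. \<not> E0 (column (p i) c) (column (p j) c)" if "i\<in>I" "j\<in>I" "i\<noteq>j" for i j
  proof -
    have "A i \<noteq> A j" using AI that by metis
    then have "\<not> iso (A i) (A j)" using fam AI that unfolding family_def by blast
    then have "\<not> E3 (p i) (p j)" using red K_LD[OF fam] AI that unfolding p_def by blast
    then show ?thesis unfolding E3_def by blast
  qed
  define col where "col = (\<lambda>i j. SOME c. \<not> E0 (column (p i) c) (column (p j) c))"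
  have sep: "\<And>i j. i\<in>I \<Longrightarrow> j\<in>I \<Longrightarrow> i\<noteq>j \<Longrightarrow> \<not> E0 (column (p i) (col i j)) (column (p j) (col i j))"
    unfolding col_def using sep0 by (metis (mono_tags, lifting) someI_ex)
  define kn where "kn = (\<lambda>S t k. \<forall>S'\<in>LD sig K. restr S' t = restr S t \<longrightarrow> \<Gamma> S' k = \<Gamma> S k)"
  define G where "G = (\<lambda>S t. guess I p col (kn S) (\<Gamma> S) t)"
  define M where "M = (\<lambda>\<sigma>::nat \<times> struc. if \<exists>S\<in>LD sig K. restr S (fst \<sigma>) = \<sigma>
      then map_option A (G (SOME S. S\<in>LD sig K \<and> restr S (fst \<sigma>) = \<sigma>) (fst \<sigma>)) else None)"
  have Minv: "M (restr S t) = map_option A (G S t)" if S: "S \<in> LD sig K" for S t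
  proof -
    define S0 where "S0 = (SOME S'. S'\<in>LD sig K \<and> restr S' t = restr S t)"
    have S0: "S0 \<in> LD sig K \<and> restr S0 t = restr S t" unfolding S0_def using S by (metis (mono_tags, lifting) someI_ex)
    have "G S0 t = G S t" unfolding G_def
    proof (rule guess_inv, intro allI impI)
      fix u k assume u: "u \<le> t"
      have r: "restr S0 u = restr S u" using S0 restr_mono u by blast
      show "(kn S0 u k \<longleftrightarrow> kn S u k) \<and> (kn S0 u k \<longrightarrow> \<Gamma> S0 k = \<Gamma> S k)"
        unfolding kn_def using r S S0 by metis
    qed
    then show ?thesis unfolding M_def using S S0 S0_def by auto
  qed
  have knmono: "kn S t k \<Longrightarrow> t \<le> t' \<Longrightarrow> kn S t' k" for S t t' k
    unfolding kn_def using restr_mono by blast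
  have knev: "S \<in> LD sig K \<Longrightarrow> \<exists>t. kn S t k" for S k
    using cont unfolding cont_on_LD_def kn_def by (metis lessI)
  show ?thesis unfolding PL_learnable_def
  proof (intro exI[of _ M] conjI ballI allI)
    fix S n assume S: "S \<in> LD sig K"
    show "M (restr S n) = None \<or> (\<exists>A\<in>K. M (restr S n) = Some A)"
    proof (cases "G S n")
      case (Some i)
      then have "i \<in> I" unfolding G_def guess_def
        by (auto split: if_splits) (metis (mono_tags, lifting) LeastI)
      then show ?thesis using Minv[OF S] Some AI by auto
    qed (simp add: Minv[OF S])
  next
    fix S B assume S: "S \<in> LD sig K" and B: "B \<in> K"
    obtain B0 where B0: "B0 \<in> K" "iso S B0" using S unfolding LD_def by blast
    define i0 where "i0 = idx B0"
    have i0I: "i0 \<in> I" unfolding i0_def I_def using B0 by simp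
    have E3i0: "E3 (p i0) (\<Gamma> S)" using red[OF S K_LD[OF fam B0(1)]] B0 AI i0I unfolding p_def i0_def
      by (simp add: Aidx E3_sym)
    have BI: "idx B \<in> I" unfolding I_def using B by simp
    have core': "infinite {t. G S t = Some (idx B)} \<longleftrightarrow> idx B = i0"
      unfolding G_def
        by (rule core[where kn="kn S"]) (auto intro: i0I E3i0 BI knmono knev[OF S] dest: sep)
    have "{n. M (restr S n) = Some B} = {t. G S t = Some (idx B)}"
    proof -
      have "M (restr S n) = Some B \<longleftrightarrow> G S n = Some (idx B)" for n
      proof (cases "G S n")
        case (Some i)
        then have "i \<in> I" unfolding G_def guess_def
          by (auto split: if_splits) (metis (mono_tags, lifting) LeastI)
        then show ?thesis using Minv[OF S] Some AI Aidx[OF B] B by auto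
      qed (simp add: Minv[OF S])
      then show ?thesis by simp
    qed
    moreover have "iso B S \<longleftrightarrow> idx B = i0"
    proof
      assume "iso B S"
      then have "E3 (\<Gamma> B) (\<Gamma> S)" using red K_LD[OF fam B] S by blast
      then have "E3 (p (idx B)) (p i0)" using E3i0 unfolding p_def using Aidx[OF B]
        by (metis E3_sym E3_trans)
      then have "iso (A (idx B)) (A i0)" using red K_LD[OF fam] AI BI i0I unfolding p_def by blast
      then have "A (idx B) = A i0" using fam AI BI i0I unfolding family_def by blast
      then show "idx B = i0" using AI BI i0I by metis
    next
      assume "idx B = i0"
      then have "E3 (\<Gamma> B) (\<Gamma> S)" using E3i0 Aidx[OF B] unfolding p_def by simp
      then show "iso B S" using red K_LD[OF fam B] S by blast
    qed
    ultimately show "infinite {n. M (restr S n) = Some B} \<longleftrightarrow> iso B S" using core' by simp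
  qed
qed

definition pt :: "nat \<Rightarrow> nat \<Rightarrow> nat \<Rightarrow> nat" where
  "pt a j r = prod_encode (a, prod_encode (j, r))"
definition psz :: "nat \<Rightarrow> nat" where "psz u = fst (prod_decode u)"
definition pj :: "nat \<Rightarrow> nat" where "pj u = fst (prod_decode (snd (prod_decode u)))"
definition pr :: "nat \<Rightarrow> nat" where "pr u = snd (prod_decode (snd (prod_decode u)))"
definition valid :: "nat \<Rightarrow> bool" where "valid u = (psz u = 0 \<or> pr u < psz u)"
definition U :: "nat \<Rightarrow> nat set" where "U k = {u. valid u \<and> psz u \<noteq> k}"
definition ecl :: "nat \<Rightarrow> nat \<Rightarrow> bool" where "ecl u v = (psz u = psz v \<and> pj u = pj v)"
definition Str :: "(nat \<Rightarrow> nat) \<Rightarrow> struc" where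
  "Str g = (\<lambda>i xs. i = 0 \<and> length xs = 2 \<and> ecl (g (xs!0)) (g (xs!1)))"
definition en :: "nat \<Rightarrow> nat \<Rightarrow> nat" where "en k = enumerate (U k)"
definition Astr :: "nat \<Rightarrow> struc" where "Astr k = Str (en k)"
definition KK :: "struc set" where "KK = Astr ` {k. 1 \<le> k}"

lemma pt_simps[simp]: "psz (pt a j r) = a" "pj (pt a j r) = j" "pr (pt a j r) = r"
  unfolding pt_def psz_def pj_def pr_def by simp_all

lemma pt_inj[simp]: "pt a j r = pt a' j' r' \<longleftrightarrow> a = a' \<and> j = j' \<and> r = r'"
  unfolding pt_def by (metis prod_encode_eq prod.inject)

lemma pt_surj: "pt (psz u) (pj u) (pr u) = u"
  unfolding pt_def psz_def pj_def pr_def by simp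

lemma U_infinite: "infinite (U k)"
proof -
  define a where "a = (if k = 0 then 1 else 0::nat)"
  have "range (\<lambda>j. pt a j 0) \<subseteq> U k" unfolding U_def valid_def a_def by auto
  moreover have "inj (\<lambda>j. pt a j 0)" by (auto intro: injI)
  ultimately show ?thesis by (meson finite_subset infinite_iff_countable_subset)
qed

lemma en_bij: "bij_betw (en k) UNIV (U k)"
  unfolding en_def by (rule bij_enumerate[OF U_infinite])

lemma Str_is_struc: "is_struc [2] (Str g)"
  unfolding is_struc_def Str_def by simp

lemma iso_Str: "bij_betw g UNIV (U k) \<Longrightarrow> iso (Str g) (Astr k)"
proof -
  assume g: "bij_betw g UNIV (U k)"
  define f where "f = inv_into UNIV (en k) \<circ> g"
  have bf: "bij f" unfolding f_def bij_def
    using bij_betw_trans[OF g bij_betw_inv_into[OF en_bij]] by (simp add: bij_betw_def)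
  have ef: "en k (f x) = g x" for x
  proof -
    have "g x \<in> range (en k)" using g en_bij[of k] by (auto simp: bij_betw_def)
    then show ?thesis unfolding f_def by (simp add: f_inv_into_f)
  qed
  show ?thesis unfolding iso_def Astr_def
    by (rule exI[of _ f]) (auto simp: bf Str_def ef)
qed

lemma LD_char: "S \<in> LD [2] KK \<longleftrightarrow> (\<exists>k g. 1 \<le> k \<and> bij_betw g UNIV (U k) \<and> S = Str g)"
proof
  assume "S \<in> LD [2] KK"
  then obtain k f where k: "1 \<le> k" and f: "bij f" and S: "\<forall>i xs. S i xs \<longleftrightarrow> Astr k i (map f xs)"
    unfolding LD_def KK_def iso_def by blast
  have "S = Str (en k \<circ> f)" using S unfolding Astr_def Str_def by (auto simp: fun_eq_iff)
  moreover have "bij_betw (en k \<circ> f) UNIV (U k)" using bij_betw_trans[OF f en_bij] .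
  ultimately show "\<exists>k g. 1 \<le> k \<and> bij_betw g UNIV (U k) \<and> S = Str g" using k by blast
next
  assume "\<exists>k g. 1 \<le> k \<and> bij_betw g UNIV (U k) \<and> S = Str g"
  then obtain k g where "1 \<le> k" "bij_betw g UNIV (U k)" "S = Str g" by blast
  then show "S \<in> LD [2] KK" unfolding LD_def KK_def using Str_is_struc iso_Str by blast
qed

lemma Str_rel: "Str g 0 [x,y] = ecl (g x) (g y)" by (simp add: Str_def)

lemma cls_img:
  assumes g: "bij_betw g UNIV (U k)"
  shows "g ` {y. ecl (g x) (g y)} = {v \<in> U k. ecl (g x) v}"
  using g unfolding bij_betw_def by auto

lemma class_fin:
  assumes g: "bij_betw g UNIV (U k)" and m: "psz (g x) = m" "1 \<le> m"
  shows "finite {y. ecl (g x) (g y)} \<and> card {y. ecl (g x) (g y)} = m"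
proof -
  have gx: "g x \<in> U k" using g by (auto simp: bij_betw_def)
  have eq: "{v \<in> U k. ecl (g x) v} = (\<lambda>r. pt m (pj (g x)) r) ` {..<m}"
  proof
    show "{v \<in> U k. ecl (g x) v} \<subseteq> (\<lambda>r. pt m (pj (g x)) r) ` {..<m}"
    proof
      fix v assume v: "v \<in> {v \<in> U k. ecl (g x) v}"
      then have "psz v = m" "pj v = pj (g x)" "pr v < m" using m unfolding U_def ecl_def valid_def by auto
      then show "v \<in> (\<lambda>r. pt m (pj (g x)) r) ` {..<m}" using pt_surj[of v] by (metis imageI lessThan_iff)
    qed
    show "(\<lambda>r. pt m (pj (g x)) r) ` {..<m} \<subseteq> {v \<in> U k. ecl (g x) v}"
      using gx m unfolding U_def ecl_def valid_def by auto
  qed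
  have inj: "inj_on g {y. ecl (g x) (g y)}" using g by (auto simp: bij_betw_def inj_on_def)
  have c: "card ((\<lambda>r. pt m (pj (g x)) r) ` {..<m}) = m" by (subst card_image) (auto intro: inj_onI)
  have "finite (g ` {y. ecl (g x) (g y)})" using cls_img[OF g] eq by simp
  then have f: "finite {y. ecl (g x) (g y)}" using finite_image_iff[OF inj] by simp
  have "card {y. ecl (g x) (g y)} = card (g ` {y. ecl (g x) (g y)})" using card_image[OF inj] by simp
  then show ?thesis using f cls_img[OF g] eq c by simp
qed

lemma class_inf:
  assumes g: "bij_betw g UNIV (U k)" and m: "psz (g x) = 0"
  shows "infinite {y. ecl (g x) (g y)}"
proof
  assume fin: "finite {y. ecl (g x) (g y)}"
  have gx: "g x \<in> U k" using g by (auto simp: bij_betw_def)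
  have "range (\<lambda>r. pt 0 (pj (g x)) r) \<subseteq> {v \<in> U k. ecl (g x) v}"
    using gx m unfolding U_def ecl_def valid_def by auto
  moreover have "inj (\<lambda>r. pt 0 (pj (g x)) r)" by (auto intro: injI)
  ultimately have "infinite {v \<in> U k. ecl (g x) v}" by (meson finite_subset infinite_iff_countable_subset)
  then show False using fin cls_img[OF g] by (metis finite_imageI)
qed

lemma class_not_k:
  assumes g: "bij_betw g UNIV (U k)" and fin: "finite {y. ecl (g x) (g y)}"
  shows "card {y. ecl (g x) (g y)} \<noteq> k"
proof -
  have "psz (g x) \<noteq> k" using g unfolding bij_betw_def U_def by auto
  moreover have "psz (g x) \<noteq> 0" using class_inf[OF g] fin by auto
  ultimately show ?thesis using class_fin[OF g] by (metis One_nat_def Suc_leI neq0_conv)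
qed

lemma class_exists:
  assumes g: "bij_betw g UNIV (U k)" and i: "1 \<le> i" "i \<noteq> k"
  shows "\<exists>x. finite {y. ecl (g x) (g y)} \<and> card {y. ecl (g x) (g y)} = i"
proof -
  have "pt i 0 0 \<in> U k" using i unfolding U_def valid_def by auto
  then obtain x where "g x = pt i 0 0" using g unfolding bij_betw_def by (metis imageE)
  then have "psz (g x) = i" by simp
  then have "finite {y. ecl (g x) (g y)} \<and> card {y. ecl (g x) (g y)} = i" using class_fin[OF g, of x i] i by blast
  then show ?thesis by blast
qed

lemma Str_eq_diff:
  assumes g: "bij_betw g UNIV (U a)" and g': "bij_betw g' UNIV (U b)" and ab: "a \<noteq> b" "1 \<le> a"
    and eq: "Str g = Str g'"
  shows False
proof -
  obtain x where x: "finite {y. ecl (g' x) (g' y)}" "card {y. ecl (g' x) (g' y)} = a"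
    using class_exists[OF g' ab(2) ab(1)] by blast
  have "{y. ecl (g x) (g y)} = {y. ecl (g' x) (g' y)}" using eq by (metis Str_rel)
  then have "finite {y. ecl (g x) (g y)}" "card {y. ecl (g x) (g y)} = a" using x by simp_all
  then show False using class_not_k[OF g] by blast
qed

lemma iso_sym: "iso S T \<Longrightarrow> iso T S"
proof -
  assume "iso S T"
  then obtain f where f: "bij f" "\<forall>i xs. S i xs \<longleftrightarrow> T i (map f xs)" unfolding iso_def by blast
  have "T i ys \<longleftrightarrow> S i (map (inv f) ys)" for i ys
  proof -
    have "map f (map (inv f) ys) = ys" using f(1) by (induction ys) (auto simp: bij_is_surj surj_f_inv_f)
    then show ?thesis using f(2) by metis
  qed
  then show ?thesis unfolding iso_def using bij_imp_bij_inv[OF f(1)] by blast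
qed

lemma family_KK: "family [2] KK"
  unfolding family_def
proof (intro conjI ballI impI)
  show "countable KK" unfolding KK_def by simp
  fix A assume "A \<in> KK" then show "is_struc [2] A" unfolding KK_def Astr_def using Str_is_struc by auto
next
  fix A B assume A: "A \<in> KK" and B: "B \<in> KK" and ne: "A \<noteq> B"
  obtain a b where a: "1 \<le> a" "A = Astr a" and b: "1 \<le> b" "B = Astr b" using A B unfolding KK_def by auto
  show "\<not> iso A B"
  proof
    assume "iso A B"
    then obtain f where f: "bij f" "\<forall>i xs. A i xs \<longleftrightarrow> B i (map f xs)" unfolding iso_def by blast
    have "A = Str (en b \<circ> f)" using f(2) b(2) unfolding Astr_def Str_def by (auto simp: fun_eq_iff)
    moreover have "bij_betw (en b \<circ> f) UNIV (U b)" using bij_betw_trans[OF f(1) en_bij] .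
    moreover have "a \<noteq> b" using ne a b by auto
    ultimately show False using Str_eq_diff[OF en_bij _ _ a(1)] a(2) unfolding Astr_def by metis
  qed
qed

definition obs :: "struc \<Rightarrow> nat \<Rightarrow> nat \<Rightarrow> nat" where
  "obs R x u = card {y. y \<le> u \<and> x \<le> u \<and> R 0 [x,y]}"
definition evp where "evp R i u c = (\<forall>x\<le>c. obs R x u \<noteq> i)"
primrec cntp where
  "cntp R i 0 = 0"
| "cntp R i (Suc u) = cntp R i u + (if evp R i u (cntp R i u) then 1 else 0)"
definition gidx where
  "gidx R t = (if \<exists>i. 1 \<le> i \<and> evp R i t (cntp R i t) then Some (LEAST i. 1 \<le> i \<and> evp R i t (cntp R i t)) else None)"
definition Mlrn :: "nat \<times> struc \<Rightarrow> struc option" where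
  "Mlrn \<sigma> = map_option Astr (gidx (snd \<sigma>) (fst \<sigma>))"

lemma cntp_mono: "t \<le> t' \<Longrightarrow> cntp R i t \<le> cntp R i t'"
  by (induction t' rule: dec_induct) auto

lemma obs_restr: "u \<le> n \<Longrightarrow> obs (snd (restr S n)) x u = obs S x u"
  unfolding obs_def restr_def by (rule arg_cong[where f=card]) auto

lemma Mlrn_restr: "Mlrn (restr S n) = map_option Astr (gidx S n)"
proof -
  have E: "u \<le> n \<Longrightarrow> evp (snd (restr S n)) i u c = evp S i u c" for u i c
    unfolding evp_def using obs_restr by simp
  have C: "u \<le> n \<Longrightarrow> cntp (snd (restr S n)) i u = cntp S i u" for u i
    by (induction u) (auto simp: E)
  show ?thesis unfolding Mlrn_def gidx_def using E C by simp
qed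

lemma ev_inf:
  assumes "\<forall>x. \<forall>\<^sub>F u in sequentially. obs R x u \<noteq> i"
  shows "infinite {u. evp R i u (cntp R i u)}"
proof
  assume fin: "finite {u. evp R i u (cntp R i u)}"
  then obtain T where T: "\<forall>t\<ge>T. \<not> evp R i t (cntp R i t)"
    by (metis (mono_tags, lifting) finite_nat_set_iff_bounded_le mem_Collect_eq not_less_eq_eq)
  have cst: "t \<ge> T \<Longrightarrow> cntp R i t = cntp R i T" for t
  proof (induction t rule: dec_induct)
    case (step n) then show ?case using T by auto
  qed simp
  have "\<forall>\<^sub>F u in sequentially. \<forall>x\<in>{..cntp R i T}. obs R x u \<noteq> i"
    by (rule eventually_ball_finite) (use assms in auto)
  then obtain T' where T': "\<forall>u\<ge>T'. \<forall>x\<le>cntp R i T. obs R x u \<noteq> i"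
    unfolding eventually_sequentially by auto
  have "evp R i (max T T') (cntp R i (max T T'))" unfolding evp_def using cst[of "max T T'"] T' by auto
  then show False using T by auto
qed

lemma ev_fin:
  assumes "\<exists>x. \<forall>\<^sub>F u in sequentially. obs R x u = i"
  shows "finite {u. evp R i u (cntp R i u)}"
proof (rule ccontr)
  assume inf: "infinite {u. evp R i u (cntp R i u)}"
  obtain x0 T where T: "\<forall>u\<ge>T. obs R x0 u = i" using assms unfolding eventually_sequentially by blast
  have unb: "\<exists>t. N \<le> cntp R i t" for N
  proof (induction N)
    case (Suc N)
    then obtain t0 where t0: "N \<le> cntp R i t0" by blast
    obtain t where t: "t \<ge> t0" "evp R i t (cntp R i t)"
      using inf by (metis (mono_tags, lifting) finite_nat_set_iff_bounded_le mem_Collect_eq nat_le_linear)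
    have "cntp R i (Suc t) = cntp R i t + 1" using t(2) by simp
    moreover have "cntp R i t0 \<le> cntp R i t" using cntp_mono t(1) by blast
    ultimately show ?case using t0 by (metis Suc_le_mono add.commute le_trans plus_1_eq_Suc)
  qed simp
  obtain t1 where t1: "x0 \<le> cntp R i t1" using unb by blast
  obtain t where t: "t \<ge> max T t1" "evp R i t (cntp R i t)"
    using inf by (metis (mono_tags, lifting) finite_nat_set_iff_bounded_le mem_Collect_eq nat_le_linear)
  have "cntp R i t1 \<le> cntp R i t" using cntp_mono t(1) by simp
  then have "x0 \<le> cntp R i t" using t1 by simp
  then have "obs R x0 t \<noteq> i" using t(2) unfolding evp_def by auto
  then show False using T t(1) by auto
qed

lemma gidx_correct:
  assumes k: "1 \<le> k" and tr: "infinite {u. evp R k u (cntp R k u)}"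
    and fl: "\<And>i. 1 \<le> i \<Longrightarrow> i \<noteq> k \<Longrightarrow> finite {u. evp R i u (cntp R i u)}"
    and i: "1 \<le> i"
  shows "infinite {t. gidx R t = Some i} \<longleftrightarrow> i = k"
proof -
  have gsub: "{t. gidx R t = Some i} \<subseteq> {u. evp R i u (cntp R i u)}" for i
  proof
    fix t assume "t \<in> {t. gidx R t = Some i}"
    then have g: "gidx R t = Some i" by simp
    then have ex: "\<exists>i. 1 \<le> i \<and> evp R i t (cntp R i t)" unfolding gidx_def by (auto split: if_splits)
    then have "i = (LEAST i. 1 \<le> i \<and> evp R i t (cntp R i t))" using g unfolding gidx_def by auto
    moreover have "evp R (LEAST i. 1 \<le> i \<and> evp R i t (cntp R i t)) t (cntp R (LEAST i. 1 \<le> i \<and> evp R i t (cntp R i t)) t)"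
      using ex by (metis (mono_tags, lifting) LeastI)
    ultimately show "t \<in> {u. evp R i u (cntp R i u)}" by simp
  qed
  show ?thesis
  proof
    assume "infinite {t. gidx R t = Some i}"
    then have "infinite {u. evp R i u (cntp R i u)}" using gsub[of i] finite_subset by blast
    then show "i = k" using fl i by blast
  next
    assume ik: "i = k"
    let ?B = "\<Union>j\<in>{j. 1 \<le> j \<and> j < k}. {u. evp R j u (cntp R j u)}"
    have finB: "finite ?B" using fl by auto
    have "{u. evp R k u (cntp R k u)} - ?B \<subseteq> {t. gidx R t = Some k}"
    proof
      fix t assume t: "t \<in> {u. evp R k u (cntp R k u)} - ?B"
      then have e: "evp R k t (cntp R k t)" by simp
      have "(LEAST i. 1 \<le> i \<and> evp R i t (cntp R i t)) = k"
      proof (rule Least_equality)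
        show "1 \<le> k \<and> evp R k t (cntp R k t)" using e k by simp
        show "\<And>y. 1 \<le> y \<and> evp R y t (cntp R y t) \<Longrightarrow> k \<le> y" using t by (metis (mono_tags, lifting) UN_I mem_Collect_eq DiffE not_le)
      qed
      then show "t \<in> {t. gidx R t = Some k}" using e k unfolding gidx_def by auto
    qed
    moreover have "infinite ({u. evp R k u (cntp R k u)} - ?B)" using tr finB by (rule Diff_infinite_finite[rotated])
    ultimately show "infinite {t. gidx R t = Some i}" using ik finite_subset by blast
  qed
qed

lemma obs_Str: "obs (Str g) x u = card {y. y \<le> u \<and> x \<le> u \<and> ecl (g x) (g y)}"
  unfolding obs_def Str_rel ..

lemma obs_fin:
  assumes fin: "finite {y. ecl (g x) (g y)}"
  shows "\<forall>\<^sub>F u in sequentially. obs (Str g) x u = card {y. ecl (g x) (g y)}"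
proof -
  let ?C = "{y. ecl (g x) (g y)}"
  have "x \<in> ?C" by (simp add: ecl_def)
  have "u \<ge> max x (Max ?C) \<Longrightarrow> {y. y \<le> u \<and> x \<le> u \<and> ecl (g x) (g y)} = ?C" for u
    using Max_ge[OF fin] by fastforce
  then show ?thesis unfolding eventually_sequentially obs_Str by metis
qed

lemma obs_inf:
  assumes inf: "infinite {y. ecl (g x) (g y)}"
  shows "\<forall>\<^sub>F u in sequentially. obs (Str g) x u > k"
proof -
  let ?C = "{y. ecl (g x) (g y)}"
  obtain F where F: "F \<subseteq> ?C" "finite F" "card F = Suc k" using infinite_arbitrarily_large[OF inf] by blast
  have "u \<ge> max x (Max (insert 0 F)) \<Longrightarrow> k < obs (Str g) x u" for u
  proof -
    assume u: "u \<ge> max x (Max (insert 0 F))"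
    have "F \<subseteq> {y. y \<le> u \<and> x \<le> u \<and> ecl (g x) (g y)}"
      using F u Max_ge[of "insert 0 F"] by fastforce
    moreover have "finite {y. y \<le> u \<and> x \<le> u \<and> ecl (g x) (g y)}" by simp
    ultimately have "card F \<le> obs (Str g) x u" unfolding obs_Str by (rule card_mono[rotated])
    then show ?thesis using F by simp
  qed
  then show ?thesis unfolding eventually_sequentially by blast
qed

lemma PL_KK: "PL_learnable [2] KK"
  unfolding PL_learnable_def
proof (intro exI[of _ Mlrn] conjI ballI allI)
  fix S n assume S: "S \<in> LD [2] KK"
  show "Mlrn (restr S n) = None \<or> (\<exists>A\<in>KK. Mlrn (restr S n) = Some A)"
  proof (cases "gidx S n")
    case (Some i)
    then have "1 \<le> i" unfolding gidx_def
      by (auto split: if_splits) (metis (mono_tags, lifting) LeastI)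
    then show ?thesis using Mlrn_restr Some unfolding KK_def by auto
  qed (simp add: Mlrn_restr)
next
  fix S B assume S: "S \<in> LD [2] KK" and B: "B \<in> KK"
  obtain k g where k: "1 \<le> k" and g: "bij_betw g UNIV (U k)" and Sg: "S = Str g"
    using S LD_char by blast
  obtain i where i: "1 \<le> i" and Bi: "B = Astr i" using B unfolding KK_def by auto
  have tr: "infinite {u. evp S k u (cntp S k u)}"
  proof (rule ev_inf, intro allI)
    fix x
    show "\<forall>\<^sub>F u in sequentially. obs S x u \<noteq> k"
    proof (cases "finite {y. ecl (g x) (g y)}")
      case True
      have "card {y. ecl (g x) (g y)} \<noteq> k" using class_not_k[OF g True] .
      then show ?thesis using obs_fin[OF True] unfolding Sg
        by (auto elim: eventually_mono)
    next
      case False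
      show ?thesis using obs_inf[OF False, of k] unfolding Sg by (auto elim: eventually_mono)
    qed
  qed
  have fl: "finite {u. evp S j u (cntp S j u)}" if jj: "1 \<le> j" "j \<noteq> k" for j
  proof (rule ev_fin)
    obtain x where x: "finite {y. ecl (g x) (g y)}" "card {y. ecl (g x) (g y)} = j"
      using class_exists[OF g jj] by blast
    show "\<exists>x. \<forall>\<^sub>F u in sequentially. obs S x u = j" using obs_fin[OF x(1)] x(2) unfolding Sg by metis
  qed
  have inj: "1 \<le> a \<Longrightarrow> 1 \<le> b \<Longrightarrow> Astr a = Astr b \<Longrightarrow> a = b" for a b
    using Str_eq_diff[OF en_bij en_bij] unfolding Astr_def by metis
  have "{n. Mlrn (restr S n) = Some B} = {t. gidx S t = Some i}"
  proof -
    have "Mlrn (restr S n) = Some B \<longleftrightarrow> gidx S n = Some i" for n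
    proof (cases "gidx S n")
      case (Some j)
      then have "1 \<le> j" unfolding gidx_def
        by (auto split: if_splits) (metis (mono_tags, lifting) LeastI)
      then show ?thesis using Mlrn_restr Some Bi inj i by auto
    qed (simp add: Mlrn_restr)
    then show ?thesis by simp
  qed
  moreover have "iso B S \<longleftrightarrow> i = k"
  proof
    assume "iso B S"
    then obtain f where f: "bij f" "\<forall>i xs. B i xs \<longleftrightarrow> S i (map f xs)" unfolding iso_def by blast
    have "B = Str (g \<circ> f)" using f(2) Sg unfolding Str_def by (auto simp: fun_eq_iff)
    moreover have "bij_betw (g \<circ> f) UNIV (U k)" using bij_betw_trans[OF f(1) g] .
    ultimately show "i = k" using Str_eq_diff[OF en_bij _ _ i] Bi unfolding Astr_def by metis
  next
    assume "i = k"
    then show "iso B S" using iso_sym[OF iso_Str[OF g]] Bi Sg by simp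
  qed
  ultimately show "infinite {n. Mlrn (restr S n) = Some B} \<longleftrightarrow> iso B S"
    using gidx_correct[OF k tr fl i] by simp
qed

lemma extend_bij:
  fixes h :: "nat \<Rightarrow> nat"
  assumes F: "finite F" and inj: "inj_on h F" and hB: "h ` F \<subseteq> B" and B: "infinite B"
  shows "\<exists>g. bij_betw g UNIV B \<and> (\<forall>x\<in>F. g x = h x)"
proof -
  define A1 where "A1 = UNIV - F"
  define B1 where "B1 = B - h ` F"
  have iA: "infinite A1" unfolding A1_def using F by (simp add: Diff_infinite_finite)
  have iB: "infinite B1" unfolding B1_def using F B by (simp add: Diff_infinite_finite)
  define k where "k = enumerate B1 \<circ> inv_into UNIV (enumerate A1)"
  have bk: "bij_betw k A1 B1" unfolding k_def
    using bij_betw_trans[OF bij_betw_inv_into[OF bij_enumerate[OF iA]] bij_enumerate[OF iB]] .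
  define g where "g x = (if x \<in> F then h x else k x)" for x
  have b1: "bij_betw g F (h ` F)"
    using inj bij_betw_cong[of F g h "h ` F"] unfolding g_def bij_betw_def by auto
  have b2: "bij_betw g A1 B1"
    using bk bij_betw_cong[of A1 g k B1] unfolding g_def A1_def by auto
  have "bij_betw g (F \<union> A1) (h ` F \<union> B1)" by (rule bij_betw_combine[OF b1 b2]) (auto simp: B1_def)
  moreover have "F \<union> A1 = UNIV" "h ` F \<union> B1 = B" unfolding A1_def B1_def using hB by auto
  ultimately show ?thesis unfolding g_def by auto
qed

lemma restr_Str_ecl:
  assumes "\<And>x y. x \<le> s \<Longrightarrow> y \<le> s \<Longrightarrow> ecl (g x) (g y) = ecl (g' x) (g' y)"
  shows "restr (Str g) s = restr (Str g') s"
proof -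
  have "(Str g i xs \<and> (\<forall>x\<in>set xs. x \<le> s)) = (Str g' i xs \<and> (\<forall>x\<in>set xs. x \<le> s))" for i xs
  proof (cases "length xs = 2 \<and> (\<forall>x\<in>set xs. x \<le> s)")
    case True
    then have "xs!0 \<le> s" "xs!1 \<le> s" by (auto simp: nth_mem)
    then show ?thesis unfolding Str_def using assms True by auto
  next
    case False then show ?thesis unfolding Str_def by auto
  qed
  then show ?thesis unfolding restr_def by (auto simp: fun_eq_iff)
qed

lemma restr_Str_agree:
  assumes "\<And>x. x \<le> s \<Longrightarrow> g x = g' x"
  shows "restr (Str g) s = restr (Str g') s"
  using assms by (intro restr_Str_ecl) auto

lemma step1:
  fixes \<Gamma> :: "struc \<Rightarrow> nat \<Rightarrow> nat" and v :: "nat \<Rightarrow> nat"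
  assumes cont: "\<And>g n. bij_betw g UNIV (U l) \<Longrightarrow> \<exists>s. \<forall>g'. bij_betw g' UNIV (U l) \<longrightarrow>
                    restr (Str g') s = restr (Str g) s \<longrightarrow> (\<forall>k<n. \<Gamma> (Str g') k = \<Gamma> (Str g) k)"
    and e0: "\<And>g. bij_betw g UNIV (U l) \<Longrightarrow> E0 (column (\<Gamma> (Str g)) c) v"
  shows "\<exists>D q N. finite D \<and> inj_on q D \<and> q ` D \<subseteq> U l \<and>
          (\<forall>g. bij_betw g UNIV (U l) \<longrightarrow> (\<forall>x\<in>D. g x = q x) \<longrightarrow> (\<forall>n\<ge>N. \<Gamma> (Str g) (prod_encode (c,n)) = v n))"
proof (rule ccontr)
  define P where "P = (\<lambda>(D::nat set) (q::nat\<Rightarrow>nat). finite D \<and> inj_on q D \<and> q ` D \<subseteq> U l)"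
  define Ext where "Ext = (\<lambda>(D::nat set) (q::nat\<Rightarrow>nat) (g::nat\<Rightarrow>nat). bij_betw g UNIV (U l) \<and> (\<forall>x\<in>D. g x = q x))"
  assume nt: "\<not> ?thesis"
  have H: "\<exists>g. Ext D q g \<and> (\<exists>n\<ge>N. \<Gamma> (Str g) (prod_encode (c,n)) \<noteq> v n)" if PDq: "P D q" for D q N
  proof -
    have "\<not> (\<forall>g. bij_betw g UNIV (U l) \<longrightarrow> (\<forall>x\<in>D. g x = q x) \<longrightarrow> (\<forall>n\<ge>N. \<Gamma> (Str g) (prod_encode (c,n)) = v n))"
      using nt PDq unfolding P_def by blast
    then obtain g where "bij_betw g UNIV (U l)" "\<forall>x\<in>D. g x = q x" "\<not> (\<forall>n\<ge>N. \<Gamma> (Str g) (prod_encode (c,n)) = v n)"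
      by blast
    then show ?thesis unfolding Ext_def by blast
  qed
  define G where "G = (\<lambda>D q N. SOME g. Ext D q g \<and> (\<exists>n\<ge>N. \<Gamma> (Str g) (prod_encode (c,n)) \<noteq> v n))"
  have G: "Ext D q (G D q N) \<and> (\<exists>n\<ge>N. \<Gamma> (Str (G D q N)) (prod_encode (c,n)) \<noteq> v n)" if "P D q" for D q N
    unfolding G_def using H[OF that] by (rule someI_ex)
  define nn where "nn = (\<lambda>g N. SOME n. n \<ge> N \<and> \<Gamma> (Str g) (prod_encode (c,n)) \<noteq> v n)"
  define ss where "ss = (\<lambda>g n. SOME s. \<forall>g'. bij_betw g' UNIV (U l) \<longrightarrow>
                    restr (Str g') s = restr (Str g) s \<longrightarrow> (\<forall>k<n. \<Gamma> (Str g') k = \<Gamma> (Str g) k))"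
  have ss: "\<forall>g'. bij_betw g' UNIV (U l) \<longrightarrow>
                    restr (Str g') (ss g n) = restr (Str g) (ss g n) \<longrightarrow> (\<forall>k<n. \<Gamma> (Str g') k = \<Gamma> (Str g) k)"
    if "bij_betw g UNIV (U l)" for g n
    unfolding ss_def using cont[OF that, of n] by (rule someI_ex)
  define gg where "gg = (\<lambda>j (Dq::nat set \<times> (nat\<Rightarrow>nat)). G (fst Dq) (snd Dq) j)"
  define step where "step = (\<lambda>j (Dq::nat set \<times> (nat\<Rightarrow>nat)).
     (fst Dq \<union> {..max (ss (gg j Dq) (Suc (prod_encode (c, nn (gg j Dq) j)))) j} \<union> {inv_into UNIV (gg j Dq) (en l j)}, gg j Dq))"
  define st where "st = rec_nat ({}, id) step"
  have st0: "st 0 = ({}, id)" unfolding st_def by simp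
  have stS: "st (Suc j) = step j (st j)" for j unfolding st_def by simp
  define DD where "DD j = fst (st j)" for j
  define qq where "qq j = snd (st j)" for j
  define gj where "gj j = gg j (st j)" for j
  have gj: "gj j = G (DD j) (qq j) j" for j unfolding gj_def gg_def DD_def qq_def ..
  define nj where "nj j = nn (gj j) j" for j
  define sj where "sj j = ss (gj j) (Suc (prod_encode (c, nj j)))" for j
  have DS: "DD (Suc j) = DD j \<union> {..max (sj j) j} \<union> {inv_into UNIV (gj j) (en l j)}" for j
    unfolding DD_def stS step_def sj_def nj_def gj_def by (simp add: case_prod_beta)
  have qS: "qq (Suc j) = gj j" for j
    unfolding qq_def stS step_def gj_def by (simp add: case_prod_beta)
  have inv: "P (DD j) (qq j) \<and> Ext (DD j) (qq j) (gj j)" for j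
  proof (induction j)
    case 0
    have p0: "P (DD 0) (qq 0)" unfolding P_def DD_def qq_def st0 by simp
    have "Ext (DD 0) (qq 0) (gj 0)" using G[OF p0, of 0] gj[of 0] by simp
    then show ?case using p0 by simp
  next
    case (Suc j)
    then have E: "Ext (DD j) (qq j) (gj j)" and Pj: "P (DD j) (qq j)" by simp_all
    have b: "bij_betw (gj j) UNIV (U l)" using E unfolding Ext_def by simp
    have fin: "finite (DD (Suc j))" using Pj unfolding DS P_def by simp
    have inj: "inj_on (qq (Suc j)) (DD (Suc j))" unfolding qS
      using b unfolding bij_betw_def by (meson inj_on_subset subset_UNIV)
    have img: "qq (Suc j) ` DD (Suc j) \<subseteq> U l" unfolding qS
      using b unfolding bij_betw_def by blast
    have pS: "P (DD (Suc j)) (qq (Suc j))" unfolding P_def using fin inj img by simp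
    have "Ext (DD (Suc j)) (qq (Suc j)) (gj (Suc j))" using G[OF pS, of "Suc j"] gj[of "Suc j"] by simp
    then show ?case using pS by simp
  qed
  have gjb: "bij_betw (gj j) UNIV (U l)" for j using inv unfolding Ext_def by blast
  have bad: "nj j \<ge> j \<and> \<Gamma> (Str (gj j)) (prod_encode (c, nj j)) \<noteq> v (nj j)" for j
  proof -
    have "\<exists>n\<ge>j. \<Gamma> (Str (gj j)) (prod_encode (c,n)) \<noteq> v n" using G inv gj by metis
    then show ?thesis unfolding nj_def nn_def by (rule someI_ex)
  qed
  have mono1: "DD j \<subseteq> DD (Suc j) \<and> (\<forall>x\<in>DD j. qq (Suc j) x = qq j x)" for j
    using inv[of j] unfolding DS qS Ext_def by auto
  have mono: "i \<le> j \<Longrightarrow> DD i \<subseteq> DD j \<and> (\<forall>x\<in>DD i. qq j x = qq i x)" for i j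
  proof (induction j rule: dec_induct)
    case (step n) then show ?case using mono1[of n] by auto
  qed simp
  define g where "g x = qq (Suc x) x" for x
  have xin: "x \<in> DD (Suc x)" for x unfolding DS by auto
  have gq: "x \<in> DD j \<Longrightarrow> g x = qq j x" for x j
  proof -
    assume x: "x \<in> DD j"
    define m where "m = max j (Suc x)"
    have "qq m x = qq (Suc x) x" using mono[of "Suc x" m] xin unfolding m_def by auto
    moreover have "qq m x = qq j x" using mono[of j m] x unfolding m_def by auto
    ultimately show ?thesis unfolding g_def by simp
  qed
  have ginj: "inj g"
  proof (rule injI)
    fix x y assume e: "g x = g y"
    define m where "m = max (Suc x) (Suc y)"
    have "x \<in> DD m" "y \<in> DD m" using mono[of "Suc x" m] mono[of "Suc y" m] xin unfolding m_def by auto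
    then show "x = y" using e gq inv[of m] unfolding P_def inj_on_def by metis
  qed
  have grange: "range g = U l"
  proof
    show "range g \<subseteq> U l" using gq xin inv unfolding P_def by blast
    show "U l \<subseteq> range g"
    proof
      fix u assume u: "u \<in> U l"
      then obtain j where j: "en l j = u" using en_bij unfolding bij_betw_def by (metis imageE)
      define z where "z = inv_into UNIV (gj j) (en l j)"
      have "z \<in> DD (Suc j)" unfolding DS z_def by simp
      then have "g z = gj j z" using gq qS by simp
      also have "... = u" unfolding z_def using bij_betw_inv_into_right[OF gjb] u j by simp
      finally show "u \<in> range g" by (metis rangeI)
    qed
  qed
  have gb: "bij_betw g UNIV (U l)" using ginj grange unfolding bij_betw_def by simp
  have agree: "\<Gamma> (Str g) (prod_encode (c, nj j)) = \<Gamma> (Str (gj j)) (prod_encode (c, nj j))" for j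
  proof -
    have "x \<le> sj j \<Longrightarrow> g x = gj j x" for x using gq[of x "Suc j"] qS unfolding DS by (simp add: le_max_iff_disj)
    then have "restr (Str g) (sj j) = restr (Str (gj j)) (sj j)" by (rule restr_Str_agree)
    then have "\<forall>k<Suc (prod_encode (c, nj j)). \<Gamma> (Str g) k = \<Gamma> (Str (gj j)) k"
      using ss[OF gjb[of j], of "Suc (prod_encode (c, nj j))"] gb unfolding sj_def by blast
    then show ?thesis by blast
  qed
  obtain m where m: "\<forall>n\<ge>m. \<Gamma> (Str g) (prod_encode (c,n)) = v n"
    using e0[OF gb] unfolding E0_def column_def by auto
  show False using m bad[of m] agree[of m] by auto
qed

lemma step2:
  assumes l: "1 \<le> l" and D: "finite D" and qi: "inj_on q D" and qU: "q ` D \<subseteq> U l"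
    and hk: "\<forall>d\<in>D. psz (q d) \<noteq> k"
  shows "\<exists>\<tau>. bij_betw \<tau> UNIV (U k) \<and> (\<forall>s. \<exists>g. bij_betw g UNIV (U l) \<and> (\<forall>x\<in>D. g x = q x) \<and>
            restr (Str g) s = restr (Str \<tau>) s)"
proof -
  have qUk: "q ` D \<subseteq> U k" using qU hk unfolding U_def by auto
  obtain \<tau> where tb: "bij_betw \<tau> UNIV (U k)" and tq: "\<forall>x\<in>D. \<tau> x = q x"
    using extend_bij[OF D qi qUk U_infinite] by blast
  define J0 where "J0 = Suc (Max (insert 0 (pj ` q ` D)))"
  have J0: "d \<in> D \<Longrightarrow> pj (q d) < J0" for d unfolding J0_def using D by (simp add: le_imp_less_Suc)
  define R where "R = {v. \<exists>d\<in>D. ecl v (q d)}"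
  define fr where "fr y = pt 0 (J0 + prod_encode (psz (\<tau> y), pj (\<tau> y))) y" for y
  define \<rho> where "\<rho> y = (if \<tau> y \<in> R then \<tau> y else fr y)" for y
  have frR: "fr y \<notin> R" for y
  proof
    assume "fr y \<in> R"
    then obtain d where d: "d \<in> D" "ecl (fr y) (q d)" unfolding R_def by blast
    then have "pj (q d) = J0 + prod_encode (psz (\<tau> y), pj (\<tau> y))" unfolding fr_def ecl_def by simp
    then show False using J0[OF d(1)] by simp
  qed
  have Rcl: "v \<in> R \<Longrightarrow> ecl v w \<Longrightarrow> w \<in> R" for v w unfolding R_def ecl_def by auto
  have eclsym: "ecl v w = ecl w v" for v w unfolding ecl_def by auto
  have tU: "\<tau> y \<in> U k" for y using tb unfolding bij_betw_def by auto
  have rU: "\<rho> y \<in> U l" for y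
  proof (cases "\<tau> y \<in> R")
    case True
    then obtain d where d: "d \<in> D" "ecl (\<tau> y) (q d)" unfolding R_def by blast
    have "q d \<in> U l" using qU d(1) by auto
    then show ?thesis using True tU[of y] d(2) unfolding \<rho>_def U_def ecl_def by auto
  next
    case False then show ?thesis using l unfolding \<rho>_def fr_def U_def valid_def by simp
  qed
  have rinj: "inj \<rho>"
  proof (rule injI)
    fix x y assume e: "\<rho> x = \<rho> y"
    show "x = y"
    proof (cases "\<tau> x \<in> R"; cases "\<tau> y \<in> R")
      assume "\<tau> x \<in> R" "\<tau> y \<in> R"
      then show ?thesis using e tb unfolding \<rho>_def bij_betw_def inj_def by auto
    next
      assume "\<tau> x \<notin> R" "\<tau> y \<notin> R"
      then show ?thesis using e unfolding \<rho>_def fr_def by simp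
    next
      assume "\<tau> x \<in> R" "\<tau> y \<notin> R"
      then show ?thesis using e frR unfolding \<rho>_def by metis
    next
      assume "\<tau> x \<notin> R" "\<tau> y \<in> R"
      then show ?thesis using e frR unfolding \<rho>_def by metis
    qed
  qed
  have rq: "d \<in> D \<Longrightarrow> \<rho> d = q d" for d
  proof -
    assume d: "d \<in> D"
    then have "\<tau> d \<in> R" using tq unfolding R_def ecl_def by auto
    then show ?thesis using tq d unfolding \<rho>_def by simp
  qed
  have match: "ecl (\<rho> x) (\<rho> y) = ecl (\<tau> x) (\<tau> y)" for x y
  proof (cases "\<tau> x \<in> R"; cases "\<tau> y \<in> R")
    assume "\<tau> x \<in> R" "\<tau> y \<in> R" then show ?thesis unfolding \<rho>_def by simp
  next
    assume "\<tau> x \<notin> R" "\<tau> y \<notin> R" then show ?thesis unfolding \<rho>_def fr_def ecl_def by simp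
  next
    assume a: "\<tau> x \<in> R" "\<tau> y \<notin> R"
    have rx: "\<rho> x = \<tau> x" and ry: "\<rho> y = fr y" using a unfolding \<rho>_def by simp_all
    have "\<not> ecl (\<tau> x) (\<tau> y)" using Rcl[of "\<tau> x" "\<tau> y"] a by blast
    moreover have "\<not> ecl (\<rho> x) (\<rho> y)" using Rcl[of "\<tau> x" "fr y"] a frR[of y] rx ry by metis
    ultimately show ?thesis by simp
  next
    assume a: "\<tau> x \<notin> R" "\<tau> y \<in> R"
    have rx: "\<rho> x = fr x" and ry: "\<rho> y = \<tau> y" using a unfolding \<rho>_def by simp_all
    have "\<not> ecl (\<tau> y) (\<tau> x)" using Rcl[of "\<tau> y" "\<tau> x"] a by blast
    then have "\<not> ecl (\<tau> x) (\<tau> y)" using eclsym[of "\<tau> x" "\<tau> y"] by simp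
    moreover have "\<not> ecl (\<rho> y) (\<rho> x)" using Rcl[of "\<tau> y" "fr x"] a frR[of x] rx ry by metis
    then have "\<not> ecl (\<rho> x) (\<rho> y)" using eclsym[of "\<rho> x" "\<rho> y"] by simp
    ultimately show ?thesis by simp
  qed
  have "\<exists>g. bij_betw g UNIV (U l) \<and> (\<forall>x\<in>D. g x = q x) \<and> restr (Str g) s = restr (Str \<tau>) s" for s
  proof -
    have F: "finite ({..s} \<union> D)" using D by simp
    obtain g where gb: "bij_betw g UNIV (U l)" and gr: "\<forall>x\<in>{..s} \<union> D. g x = \<rho> x"
      using extend_bij[OF F inj_on_subset[OF rinj subset_UNIV] _ U_infinite] rU by blast
    have "restr (Str g) s = restr (Str \<tau>) s"
      by (rule restr_Str_ecl) (use gr match in auto)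
    moreover have "\<forall>x\<in>D. g x = q x" using gr rq by auto
    ultimately show ?thesis using gb by blast
  qed
  then show ?thesis using tb by blast
qed

lemma Str_LD: "1 \<le> k \<Longrightarrow> bij_betw g UNIV (U k) \<Longrightarrow> Str g \<in> LD [2] KK"
  using LD_char by blast

lemma notE3: "\<not> E3_learnable [2] KK"
proof
  assume "E3_learnable [2] KK"
  then obtain \<Gamma> where cont: "cont_on_LD [2] KK \<Gamma>"
    and red: "\<And>S S'. S\<in>LD [2] KK \<Longrightarrow> S'\<in>LD [2] KK \<Longrightarrow> iso S S' \<longleftrightarrow> E3 (\<Gamma> S) (\<Gamma> S')"
    unfolding E3_learnable_def by blast
  have A_LD: "1 \<le> k \<Longrightarrow> Astr k \<in> LD [2] KK" for k unfolding Astr_def using Str_LD en_bij by blast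
  have "Astr 1 \<noteq> Astr 2" using Str_eq_diff[OF en_bij en_bij, of 1 2] unfolding Astr_def by auto
  then have "\<not> iso (Astr 1) (Astr 2)" using family_KK unfolding family_def KK_def by auto
  then have "\<not> E3 (\<Gamma> (Astr 1)) (\<Gamma> (Astr 2))" using red A_LD by auto
  then obtain c where c: "\<not> E0 (column (\<Gamma> (Astr 1)) c) (column (\<Gamma> (Astr 2)) c)" unfolding E3_def by blast
  have S1: "\<exists>D q N. finite D \<and> inj_on q D \<and> q ` D \<subseteq> U l \<and>
          (\<forall>g. bij_betw g UNIV (U l) \<longrightarrow> (\<forall>x\<in>D. g x = q x) \<longrightarrow>
             (\<forall>n\<ge>N. \<Gamma> (Str g) (prod_encode (c,n)) = column (\<Gamma> (Astr l)) c n))" if l: "1 \<le> l" for l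
  proof (rule step1)
    fix g :: "nat \<Rightarrow> nat" and n assume g: "bij_betw g UNIV (U l)"
    obtain s where s: "\<forall>S'\<in>LD [2] KK. restr S' s = restr (Str g) s \<longrightarrow> (\<forall>k<n. \<Gamma> S' k = \<Gamma> (Str g) k)"
      using cont Str_LD[OF l g] unfolding cont_on_LD_def by blast
    show "\<exists>s. \<forall>g'. bij_betw g' UNIV (U l) \<longrightarrow>
                    restr (Str g') s = restr (Str g) s \<longrightarrow> (\<forall>k<n. \<Gamma> (Str g') k = \<Gamma> (Str g) k)"
      using s Str_LD[OF l] by blast
  next
    fix g :: "nat \<Rightarrow> nat" assume g: "bij_betw g UNIV (U l)"
    have "E3 (\<Gamma> (Str g)) (\<Gamma> (Astr l))" using red Str_LD[OF l g] A_LD[OF l] iso_Str[OF g] by blast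
    then show "E0 (column (\<Gamma> (Str g)) c) (column (\<Gamma> (Astr l)) c)" unfolding E3_def by blast
  qed
  obtain D1 q1 N1 where D1: "finite D1" "inj_on q1 D1" "q1 ` D1 \<subseteq> U 1"
    and P1: "\<forall>g. bij_betw g UNIV (U 1) \<longrightarrow> (\<forall>x\<in>D1. g x = q1 x) \<longrightarrow>
             (\<forall>n\<ge>N1. \<Gamma> (Str g) (prod_encode (c,n)) = column (\<Gamma> (Astr 1)) c n)"
    using S1[of 1] by auto
  obtain D2 q2 N2 where D2: "finite D2" "inj_on q2 D2" "q2 ` D2 \<subseteq> U 2"
    and P2: "\<forall>g. bij_betw g UNIV (U 2) \<longrightarrow> (\<forall>x\<in>D2. g x = q2 x) \<longrightarrow>
             (\<forall>n\<ge>N2. \<Gamma> (Str g) (prod_encode (c,n)) = column (\<Gamma> (Astr 2)) c n)"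
    using S1[of 2] by auto
  define k where "k = Suc (Max (insert 0 (psz ` q1 ` D1)) + Max (insert 0 (psz ` q2 ` D2)))"
  have k1: "1 \<le> k" unfolding k_def by simp
  have hk1: "\<forall>d\<in>D1. psz (q1 d) \<noteq> k"
  proof
    fix d assume "d \<in> D1"
    then have "psz (q1 d) \<le> Max (insert 0 (psz ` q1 ` D1))" using D1(1) by simp
    then show "psz (q1 d) \<noteq> k" unfolding k_def by linarith
  qed
  have hk2: "\<forall>d\<in>D2. psz (q2 d) \<noteq> k"
  proof
    fix d assume "d \<in> D2"
    then have "psz (q2 d) \<le> Max (insert 0 (psz ` q2 ` D2))" using D2(1) by simp
    then show "psz (q2 d) \<noteq> k" unfolding k_def by linarith
  qed
  have T: "\<exists>\<tau>. bij_betw \<tau> UNIV (U k) \<and> E0 (column (\<Gamma> (Str \<tau>)) c) (column (\<Gamma> (Astr l)) c)"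
    if l: "1 \<le> l" and Dq: "finite D" "inj_on q D" "q ` D \<subseteq> U l" and hk: "\<forall>d\<in>D. psz (q d) \<noteq> k"
    and P: "\<forall>g. bij_betw g UNIV (U l) \<longrightarrow> (\<forall>x\<in>D. g x = q x) \<longrightarrow>
             (\<forall>n\<ge>N. \<Gamma> (Str g) (prod_encode (c,n)) = column (\<Gamma> (Astr l)) c n)" for l D q N
  proof -
    obtain \<tau> where tb: "bij_betw \<tau> UNIV (U k)" and tr: "\<forall>s. \<exists>g. bij_betw g UNIV (U l) \<and> (\<forall>x\<in>D. g x = q x) \<and>
            restr (Str g) s = restr (Str \<tau>) s"
      using step2[OF l Dq hk] by blast
    have "\<Gamma> (Str \<tau>) (prod_encode (c,n)) = column (\<Gamma> (Astr l)) c n" if n: "n \<ge> N" for n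
    proof -
      obtain s where s: "\<forall>S'\<in>LD [2] KK. restr S' s = restr (Str \<tau>) s \<longrightarrow>
            (\<forall>k<Suc (prod_encode (c,n)). \<Gamma> S' k = \<Gamma> (Str \<tau>) k)"
        using cont Str_LD[OF k1 tb] unfolding cont_on_LD_def by blast
      obtain g where g: "bij_betw g UNIV (U l)" "\<forall>x\<in>D. g x = q x" "restr (Str g) s = restr (Str \<tau>) s"
        using tr by blast
      have "\<Gamma> (Str g) (prod_encode (c,n)) = \<Gamma> (Str \<tau>) (prod_encode (c,n))"
        using s Str_LD[OF l g(1)] g(3) by blast
      moreover have "\<Gamma> (Str g) (prod_encode (c,n)) = column (\<Gamma> (Astr l)) c n" using P g n by blast
      ultimately show ?thesis by simp
    qed
    then have "E0 (column (\<Gamma> (Str \<tau>)) c) (column (\<Gamma> (Astr l)) c)" unfolding E0_def column_def by blast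
    then show ?thesis using tb by blast
  qed
  obtain \<tau>1 where t1: "bij_betw \<tau>1 UNIV (U k)" "E0 (column (\<Gamma> (Str \<tau>1)) c) (column (\<Gamma> (Astr 1)) c)"
    using T[of 1 D1 q1 N1] D1 hk1 P1 by auto
  obtain \<tau>2 where t2: "bij_betw \<tau>2 UNIV (U k)" "E0 (column (\<Gamma> (Str \<tau>2)) c) (column (\<Gamma> (Astr 2)) c)"
    using T[of 2 D2 q2 N2] D2 hk2 P2 by auto
  have "E3 (\<Gamma> (Str \<tau>1)) (\<Gamma> (Astr k))" using red Str_LD[OF k1 t1(1)] A_LD[OF k1] iso_Str[OF t1(1)] by blast
  moreover have "E3 (\<Gamma> (Str \<tau>2)) (\<Gamma> (Astr k))" using red Str_LD[OF k1 t2(1)] A_LD[OF k1] iso_Str[OF t2(1)] by blast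
  ultimately have "E3 (\<Gamma> (Str \<tau>1)) (\<Gamma> (Str \<tau>2))" using E3_sym E3_trans by blast
  then have "E0 (column (\<Gamma> (Str \<tau>1)) c) (column (\<Gamma> (Str \<tau>2)) c)" unfolding E3_def by blast
  then have "E0 (column (\<Gamma> (Astr 1)) c) (column (\<Gamma> (Astr 2)) c)" using t1(2) t2(2) E0_sym E0_trans by metis
  then show False using c by simp
qed

theorem mainTheorem19:
  shows "(\<forall>sig K. family sig K \<and> E3_learnable sig K \<longrightarrow> PL_learnable sig K) \<and>
         (\<exists>sig K. family sig K \<and> PL_learnable sig K \<and> \<not> E3_learnable sig K)"
  using part1 family_KK PL_KK notE3 by blast

end
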